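(* Let $\mathcal C=\mathcal C(I,A,(\rho_i)_{i\in I},(C^a)_{a\in A})$ be a connected Cartan scheme and $\mathcal R=\mathcal R(\mathcal C,(R^a)_{a\in A})$ a root system of type $\mathcal C$. Let $a\in A$ and $i,j\in I$ with $m^a_{i,j}=3$. Then $c^{\rho_i(a)}_{il}+c^{\rho_i(a)}_{jl}=c^{\rho_i\rho_j(a)}_{il}+c^{\rho_i\rho_j(a)}_{jl}$ for all $l\in I$.
   Context: Let $I$ be a nonempty finite set and $\{\alpha_i\mid i\in I\}$ the standard basis of $\mathbb Z^I$; $\mathbb N_0=\{0,1,2,\dots\}$. A generalized Cartan matrix is $C=(c_{ij})_{i,j\in I}\in\mathbb Z^{I\times I}$ with $c_{ii}=2$, $c_{jk}\le0$ for $j\ne k$, and $c_{ij}=0\Rightarrow c_{ji}=0$. A Cartan scheme $\mathcal C=\mathcal C(I,A,(\rho_i)_{i\in I},(C^a)_{a\in A})$ consists of a nonempty set $A$, maps $\rho_i:A\to A$ and generalized Cartan matrices $C^a=(c^a_{jk})_{j,k\in I}$ such that (C1) $\rho_i^2=\mathrm{id}$ and (C2) $c^a_{ij}=c^{\rho_i(a)}_{ij}$ for all $a\in A$, $i,j\in I$. It is connected if the group generated by the $\rho_i$ acts transitively on $A$. For $i\in I$, $a\in A$ let $\sigma_i^a\in\mathrm{Aut}(\mathbb Z^I)$, $\sigma_i^a(\alpha_j)=\alpha_j-c^a_{ij}\alpha_i$. A root system of type $\mathcal C$ is a family $\mathcal R=\mathcal R(\mathcal C,(R^a)_{a\in A})$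 of subsets $R^a\subset\mathbb Z^I$ such that, writing $R^a_+=R^a\cap\mathbb N_0^I$ and $m^a_{i,j}=|R^a\cap(\mathbb N_0\alpha_i+\mathbb N_0\alpha_j)|$, for all $a\in A$, $i,j\in I$: (R1) $R^a=R^a_+\cup(-R^a_+)$; (R2) $R^a\cap\mathbb Z\alpha_i=\{\alpha_i,-\alpha_i\}$; (R3) $\sigma_i^a(R^a)=R^{\rho_i(a)}$; (R4) if $i\neq j$ and $m^a_{i,j}$ is finite then $(\rho_i\rho_j)^{m^a_{i,j}}(a)=a$. *)

theory Defs
  imports Main
begin

text \<open>Index set I is the finite type 'i (nonempty automatically); Z^I is 'i \<Rightarrow> int.
 The object set A is the type 'a (nonempty automatically).\<close>

definition alpha :: "'i \<Rightarrow> ('i \<Rightarrow> int)" where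
  "alpha i = (\<lambda>k. if k = i then 1 else 0)"

definition gen_cartan_matrix :: "('i \<Rightarrow> 'i \<Rightarrow> int) \<Rightarrow> bool" where
  "gen_cartan_matrix c \<longleftrightarrow>
     (\<forall>i. c i i = 2) \<and> (\<forall>j k. j \<noteq> k \<longrightarrow> c j k \<le> 0) \<and>
     (\<forall>i j. c i j = 0 \<longrightarrow> c j i = 0)"

definition cartan_scheme :: "('i::finite \<Rightarrow> 'a \<Rightarrow> 'a) \<Rightarrow> ('a \<Rightarrow> 'i \<Rightarrow> 'i \<Rightarrow> int) \<Rightarrow> bool" where
  "cartan_scheme rho C \<longleftrightarrow>
     (\<forall>a. gen_cartan_matrix (C a)) \<and>
     (\<forall>i a. rho i (rho i a) = a) \<and>
     (\<forall>a i j. C a i j = C (rho i a) i j)"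

text \<open>Connected: the group generated by the rho_i acts transitively. Since each rho_i
 is an involution, the orbit of a is the set of points reachable by finitely many rho_i steps.\<close>
definition connected_scheme :: "('i \<Rightarrow> 'a \<Rightarrow> 'a) \<Rightarrow> bool" where
  "connected_scheme rho \<longleftrightarrow> (\<forall>a b. (a, b) \<in> {(x, rho i x) | x i. True}\<^sup>*)"

definition sigma :: "('a \<Rightarrow> 'i \<Rightarrow> 'i \<Rightarrow> int) \<Rightarrow> 'i::finite \<Rightarrow> 'a \<Rightarrow> ('i \<Rightarrow> int) \<Rightarrow> ('i \<Rightarrow> int)" where
  "sigma C i a v = (\<lambda>k. if k = i then v k - (\<Sum>j\<in>UNIV. C a i j * v j) else v k)"

definition pos_roots :: "('a \<Rightarrow> ('i \<Rightarrow> int) set) \<Rightarrow> 'a \<Rightarrow> ('i \<Rightarrow> int) set" where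
  "pos_roots R a = R a \<inter> {v. \<forall>k. 0 \<le> v k}"

definition m_ij :: "('a \<Rightarrow> ('i \<Rightarrow> int) set) \<Rightarrow> 'a \<Rightarrow> 'i \<Rightarrow> 'i \<Rightarrow> nat" where
  "m_ij R a i j = card (R a \<inter> {v. \<exists>p q::nat. v = (\<lambda>k. int p * alpha i k + int q * alpha j k)})"

definition finite_m :: "('a \<Rightarrow> ('i \<Rightarrow> int) set) \<Rightarrow> 'a \<Rightarrow> 'i \<Rightarrow> 'i \<Rightarrow> bool" where
  "finite_m R a i j = finite (R a \<inter> {v. \<exists>p q::nat. v = (\<lambda>k. int p * alpha i k + int q * alpha j k)})"

definition root_system ::
  "('i::finite \<Rightarrow> 'a \<Rightarrow> 'a) \<Rightarrow> ('a \<Rightarrow> 'i \<Rightarrow> 'i \<Rightarrow> int) \<Rightarrow> ('a \<Rightarrow> ('i \<Rightarrow> int) set) \<Rightarrow> bool" where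
  "root_system rho C R \<longleftrightarrow> cartan_scheme rho C \<and>
     (\<forall>a. R a = pos_roots R a \<union> uminus ` pos_roots R a) \<and>
     (\<forall>a i. R a \<inter> {v. \<exists>z::int. v = (\<lambda>k. z * alpha i k)} = {alpha i, - alpha i}) \<and>
     (\<forall>a i. sigma C i a ` R a = R (rho i a)) \<and>
     (\<forall>a i j. i \<noteq> j \<and> finite_m R a i j \<longrightarrow> ((rho i \<circ> rho j) ^^ m_ij R a i j) a = a)"

end

theory Submission imports Defs begin

definition G :: "'i \<Rightarrow> 'i \<Rightarrow> 'i \<Rightarrow> int \<Rightarrow> int \<Rightarrow> int \<Rightarrow> 'i \<Rightarrow> int" where
  "G l i j z m n = (\<lambda>k. z * alpha l k + m * alpha i k + n * alpha j k)"

lemma sum_alpha: "(\<Sum>k\<in>(UNIV::'i::finite set). c k * alpha i k) = c i"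
  by (simp add: alpha_def if_distrib cong: if_cong)

lemma sum_G: "(\<Sum>k\<in>(UNIV::'i::finite set). c k * G l i j z m n k) = z * c l + m * c i + n * c j"
proof -
  have "(\<Sum>k\<in>(UNIV::'i set). c k * G l i j z m n k)
     = (\<Sum>k\<in>UNIV. z * (c k * alpha l k) + m * (c k * alpha i k) + n * (c k * alpha j k))"
    by (rule sum.cong) (auto simp: G_def algebra_simps)
  also have "\<dots> = z * c l + m * c i + n * c j"
    by (simp add: sum.distrib sum_distrib_left[symmetric] sum_alpha)
  finally show ?thesis .
qed

lemma sigma_G_i:
  fixes C :: "'a \<Rightarrow> 'i::finite \<Rightarrow> 'i \<Rightarrow> int"
  assumes "z = 0 \<or> l \<noteq> i" "i \<noteq> j"
  shows "sigma C i x (G l i j z m n) = G l i j z (m - (z * C x i l + m * C x i i + n * C x i j)) n"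
  using assms unfolding sigma_def sum_G by (auto simp: G_def alpha_def fun_eq_iff)

lemma sigma_G_j:
  fixes C :: "'a \<Rightarrow> 'i::finite \<Rightarrow> 'i \<Rightarrow> int"
  assumes "z = 0 \<or> l \<noteq> j" "i \<noteq> j"
  shows "sigma C j x (G l i j z m n) = G l i j z m (n - (z * C x j l + m * C x j i + n * C x j j))"
  using assms unfolding sigma_def sum_G by (auto simp: G_def alpha_def fun_eq_iff)

lemma rs_R1: "root_system rho C R \<Longrightarrow> R x = pos_roots R x \<union> uminus ` pos_roots R x"
  unfolding root_system_def by (elim conjE) (drule spec, assumption)

lemma rs_pos:
  assumes "root_system rho C R" "v \<in> R x" "v k0 > 0"
  shows "v k \<ge> 0"
proof -
  have "v \<in> pos_roots R x \<union> uminus ` pos_roots R x" using rs_R1[OF assms(1), of x] assms(2) by blast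
  then show ?thesis
  proof
    assume "v \<in> pos_roots R x" then show ?thesis by (simp add: pos_roots_def)
  next
    assume "v \<in> uminus ` pos_roots R x"
    then obtain u where "v = - u" "\<forall>k. 0 \<le> u k" by (auto simp: pos_roots_def)
    then have "v k0 = - u k0" "0 \<le> u k0" by auto
    with assms(3) have False by linarith
    then show ?thesis ..
  qed
qed

lemma rs_neg:
  assumes "root_system rho C R" "v \<in> R x" "v k0 < 0"
  shows "v k \<le> 0"
proof -
  have "v \<in> pos_roots R x \<union> uminus ` pos_roots R x" using rs_R1[OF assms(1), of x] assms(2) by blast
  then show ?thesis
  proof
    assume "v \<in> pos_roots R x" then have "0 \<le> v k0" by (simp add: pos_roots_def)
    then have False using assms(3) by linarith
    then show ?thesis ..
  next
    assume "v \<in> uminus ` pos_roots R x"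
    then obtain u where "v = - u" "\<forall>k. 0 \<le> u k" by (auto simp: pos_roots_def)
    then show ?thesis by simp
  qed
qed

lemma rs_R2: "root_system rho C R \<Longrightarrow> R x \<inter> {v. \<exists>z::int. v = (\<lambda>k. z * alpha i k)} = {alpha i, - alpha i}"
  unfolding root_system_def by (elim conjE) (drule spec, drule spec, assumption)

lemma rs_alpha: "root_system rho C R \<Longrightarrow> alpha i \<in> R x"
  using rs_R2[of rho C R x i] by blast

lemma rs_R3: "root_system rho C R \<Longrightarrow> sigma C i x ` R x = R (rho i x)"
  unfolding root_system_def by (elim conjE) (drule spec, drule spec, assumption)

lemma rs_sigma: "root_system rho C R \<Longrightarrow> v \<in> R x \<Longrightarrow> y = rho i x \<Longrightarrow> sigma C i x v \<in> R y"
  using rs_R3[of rho C R i x] by blast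

lemma rs_cs: "root_system rho C R \<Longrightarrow> cartan_scheme rho C"
  unfolding root_system_def by blast

lemma cs_diag: "cartan_scheme rho C \<Longrightarrow> C x i i = 2"
  unfolding cartan_scheme_def gen_cartan_matrix_def by blast
lemma cs_off: "cartan_scheme rho C \<Longrightarrow> j \<noteq> k \<Longrightarrow> C x j k \<le> 0"
  unfolding cartan_scheme_def gen_cartan_matrix_def by blast
lemma cs_zero: "cartan_scheme rho C \<Longrightarrow> C x i j = 0 \<Longrightarrow> C x j i = 0"
  unfolding cartan_scheme_def gen_cartan_matrix_def by blast
lemma cs_inv: "cartan_scheme rho C \<Longrightarrow> rho i (rho i x) = x"
  unfolding cartan_scheme_def by blast
lemma cs_C2: "cartan_scheme rho C \<Longrightarrow> C (rho i x) i j = C x i j"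
  unfolding cartan_scheme_def by metis

lemma G_l: "l \<noteq> i \<Longrightarrow> l \<noteq> j \<Longrightarrow> G l i j z m n l = z" by (simp add: G_def alpha_def)
lemma G_i: "l \<noteq> i \<Longrightarrow> i \<noteq> j \<Longrightarrow> G l i j z m n i = m" by (simp add: G_def alpha_def)
lemma G_j: "l \<noteq> j \<Longrightarrow> i \<noteq> j \<Longrightarrow> G l i j z m n j = n" by (simp add: G_def alpha_def)
lemma G0_i: "i \<noteq> j \<Longrightarrow> G l i j 0 m n i = m" by (simp add: G_def alpha_def)
lemma G0_j: "i \<noteq> j \<Longrightarrow> G l i j 0 m n j = n" by (simp add: G_def alpha_def)

lemma stepI:
  assumes rs: "root_system rho C R" and "z = 0 \<or> l \<noteq> i" "i \<noteq> j" "G l i j z m n \<in> R x"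
    and "m' = m - (z * C x i l + m * C x i i + n * C x i j)" "y = rho i x"
  shows "G l i j z m' n \<in> R y"
  using rs_sigma[OF rs assms(4) assms(6)] sigma_G_i[OF assms(2,3), where C=C and x=x] assms(5) by simp

lemma stepJ:
  assumes rs: "root_system rho C R" and "z = 0 \<or> l \<noteq> j" "i \<noteq> j" "G l i j z m n \<in> R x"
    and "n' = n - (z * C x j l + m * C x j i + n * C x j j)" "y = rho j x"
  shows "G l i j z m n' \<in> R y"
  using rs_sigma[OF rs assms(4) assms(6)] sigma_G_j[OF assms(2,3), where C=C and x=x] assms(5) by simp

lemma lemB:
  assumes rs: "root_system rho C R" and ij: "i \<noteq> j" and h1: "C a i j = -1" and h2: "C a j i = -1"
  shows "C (rho i a) j i = -1"
proof -
  have cs: "cartan_scheme rho C" using rs by (rule rs_cs)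
  define b where "b = rho i a"
  have bij: "C b i j = -1" using cs_C2[OF cs, of i a j] h1 by (simp add: b_def)
  have "C b j i \<noteq> 0" using cs_zero[OF cs, of b j i] bij by auto
  moreover have "C b j i \<le> 0" using cs_off[OF cs] ij by metis
  ultimately have k1: "C b j i \<le> -1" by linarith
  have a0: "G i i j 0 1 0 \<in> R (rho j b)" using rs_alpha[OF rs, of i "rho j b"]
    by (simp add: G_def alpha_def fun_eq_iff)
  have g1: "G i i j 0 1 (- C b j i) \<in> R b"
    by (rule stepJ[OF rs _ ij a0]) (simp_all add: cs_C2[OF cs] cs_inv[OF cs])
  have rb: "rho i b = a" by (simp add: b_def cs_inv[OF cs])
  have g2: "G i i j 0 (- C b j i - 1) (- C b j i) \<in> R a"
    by (rule stepI[OF rs _ ij g1]) (simp_all add: cs_diag[OF cs] bij rb)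
  have g3: "G i i j 0 (- C b j i - 1) (-1) \<in> R (rho j a)"
    by (rule stepJ[OF rs _ ij g2]) (simp_all add: cs_diag[OF cs] h2 algebra_simps)
  have "G i i j 0 (- C b j i - 1) (-1) i \<le> 0"
    by (rule rs_neg[OF rs g3, of j]) (simp add: G0_j[OF ij])
  then have "- C b j i - 1 \<le> 0" by (simp add: G0_i[OF ij])
  with k1 show ?thesis by (simp add: b_def)
qed

lemma lemA:
  assumes rs: "root_system rho C R" and ij: "i \<noteq> j" and fin: "finite_m R a i j"
    and m3: "m_ij R a i j = 3"
  shows "C a i j = -1 \<and> C a j i = -1"
proof -
  have cs: "cartan_scheme rho C" using rs by (rule rs_cs)
  define T where "T = R a \<inter> {v. \<exists>p q::nat. v = (\<lambda>k. int p * alpha i k + int q * alpha j k)}"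
  have finT: "finite T" using fin by (simp add: T_def finite_m_def)
  have cT: "card T = 3" using m3 by (simp add: T_def m_ij_def)
  have memT: "G i i j 0 (int p) (int q) \<in> T" if "G i i j 0 (int p) (int q) \<in> R a" for p q
    using that unfolding T_def by (auto simp: G_def)
  have ai: "alpha i = G i i j 0 1 0" by (simp add: G_def)
  have aj: "alpha j = G i i j 0 0 1" by (simp add: G_def)
  have aiT: "alpha i \<in> T" using memT[of 1 0] rs_alpha[OF rs, of i a] ai by simp
  have ajT: "alpha j \<in> T" using memT[of 0 1] rs_alpha[OF rs, of j a] aj by simp
  have neq: "alpha i \<noteq> alpha j" using ij by (auto simp: alpha_def fun_eq_iff)
  obtain \<beta> where bT: "\<beta> \<in> T" and b1: "\<beta> \<noteq> alpha i" and b2: "\<beta> \<noteq> alpha j"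
  proof (rule ccontr)
    assume "\<not> thesis"
    then have "T \<subseteq> {alpha i, alpha j}" using that by blast
    then have "card T \<le> card {alpha i, alpha j}" by (rule card_mono[rotated]) simp
    also have "\<dots> \<le> 2" by (simp add: card_insert_if)
    finally show False using cT by simp
  qed
  from bT obtain p q :: nat where bR: "\<beta> \<in> R a" and bdef: "\<beta> = G i i j 0 (int p) (int q)"
    unfolding T_def by (auto simp: G_def)
  have p1: "p \<ge> 1"
  proof (rule ccontr)
    assume "\<not> p \<ge> 1" then have "p = 0" by simp
    then have "\<beta> \<in> R a \<inter> {v. \<exists>z::int. v = (\<lambda>k. z * alpha j k)}" using bR bdef by (auto simp: G_def)
    then have "\<beta> \<in> {alpha j, - alpha j}" using rs_R2[OF rs, of a j] by simp
    then have "\<beta> = - alpha j" using b2 by simp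
    then have "\<beta> j = -1" by (simp add: alpha_def)
    moreover have "\<beta> j = int q" using bdef G0_j[OF ij] by simp
    ultimately show False by simp
  qed
  have q1: "q \<ge> 1"
  proof (rule ccontr)
    assume "\<not> q \<ge> 1" then have "q = 0" by simp
    then have "\<beta> \<in> R a \<inter> {v. \<exists>z::int. v = (\<lambda>k. z * alpha i k)}" using bR bdef by (auto simp: G_def)
    then have "\<beta> \<in> {alpha i, - alpha i}" using rs_R2[OF rs, of a i] by simp
    then have "\<beta> = - alpha i" using b1 by simp
    then have "\<beta> i = -1" by (simp add: alpha_def)
    moreover have "\<beta> i = int p" using bdef G0_i[OF ij] by simp
    ultimately show False by simp
  qed
  have s1: "G i i j 0 (int p - (int p * 2 + int q * C a i j)) (int q) \<in> R (rho i a)"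
    by (rule stepI[OF rs _ ij bR[unfolded bdef]]) (simp_all add: cs_diag[OF cs])
  have "G i i j 0 (int p - (int p * 2 + int q * C a i j)) (int q) i \<ge> 0"
    by (rule rs_pos[OF rs s1, of j]) (use q1 in \<open>simp add: G0_j[OF ij]\<close>)
  then have e1: "int p - (int p * 2 + int q * C a i j) \<ge> 0" by (simp add: G0_i[OF ij])
  have cij: "C a i j \<le> -1"
  proof -
    have "C a i j \<le> 0" using cs_off[OF cs] ij by metis
    moreover have "C a i j \<noteq> 0" using e1 p1 by auto
    ultimately show ?thesis by linarith
  qed
  have s2: "G i i j 0 (int p) (int q - (int p * C a j i + int q * 2)) \<in> R (rho j a)"
    by (rule stepJ[OF rs _ ij bR[unfolded bdef]]) (simp_all add: cs_diag[OF cs])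
  have "G i i j 0 (int p) (int q - (int p * C a j i + int q * 2)) j \<ge> 0"
    by (rule rs_pos[OF rs s2, of i]) (use p1 in \<open>simp add: G0_i[OF ij]\<close>)
  then have e2: "int q - (int p * C a j i + int q * 2) \<ge> 0" by (simp add: G0_j[OF ij])
  have cji: "C a j i \<le> -1"
  proof -
    have "C a j i \<le> 0" using cs_off[OF cs] ij by metis
    moreover have "C a j i \<noteq> 0" using e2 q1 by auto
    ultimately show ?thesis by linarith
  qed
  have g1R: "G i i j 0 (- C a i j) 1 \<in> R a"
    by (rule stepI[OF rs _ ij rs_alpha[OF rs, of j "rho i a", unfolded aj]])
       (simp_all add: cs_C2[OF cs] cs_inv[OF cs])
  have g2R: "G i i j 0 1 (- C a j i) \<in> R a"
    by (rule stepJ[OF rs _ ij rs_alpha[OF rs, of i "rho j a", unfolded ai]])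
       (simp_all add: cs_C2[OF cs] cs_inv[OF cs])
  have g1T: "G i i j 0 (- C a i j) 1 \<in> T"
    using memT[of "nat (- C a i j)" 1] g1R cij by simp
  have g2T: "G i i j 0 1 (- C a j i) \<in> T"
    using memT[of 1 "nat (- C a j i)"] g2R cji by simp
  have vi: "\<And>m n. G i i j 0 m n i = m" and vj: "\<And>m n. G i i j 0 m n j = n"
    using G0_i[OF ij] G0_j[OF ij] by auto
  have ai_i: "alpha i i = 1" "alpha i j = 0" "alpha j i = 0" "alpha j j = 1"
    using ij by (auto simp: alpha_def)
  have d1: "G i i j 0 (- C a i j) 1 \<noteq> alpha i" "G i i j 0 (- C a i j) 1 \<noteq> alpha j"
    "G i i j 0 1 (- C a j i) \<noteq> alpha i" "G i i j 0 1 (- C a j i) \<noteq> alpha j"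
  proof -
    show "G i i j 0 (- C a i j) 1 \<noteq> alpha i"
    proof
      assume "G i i j 0 (- C a i j) 1 = alpha i"
      then have "G i i j 0 (- C a i j) 1 j = alpha i j" by simp
      then show False using vj ai_i by simp
    qed
    show "G i i j 0 (- C a i j) 1 \<noteq> alpha j"
    proof
      assume "G i i j 0 (- C a i j) 1 = alpha j"
      then have "G i i j 0 (- C a i j) 1 i = alpha j i" by simp
      then show False using vi ai_i cij by simp
    qed
    show "G i i j 0 1 (- C a j i) \<noteq> alpha i"
    proof
      assume "G i i j 0 1 (- C a j i) = alpha i"
      then have "G i i j 0 1 (- C a j i) j = alpha i j" by simp
      then show False using vj ai_i cji by simp
    qed
    show "G i i j 0 1 (- C a j i) \<noteq> alpha j"
    proof
      assume "G i i j 0 1 (- C a j i) = alpha j"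
      then have "G i i j 0 1 (- C a j i) i = alpha j i" by simp
      then show False using vi ai_i by simp
    qed
  qed
  have eq: "G i i j 0 (- C a i j) 1 = G i i j 0 1 (- C a j i)"
  proof (rule ccontr)
    assume ne: "G i i j 0 (- C a i j) 1 \<noteq> G i i j 0 1 (- C a j i)"
    have "{alpha i, alpha j, G i i j 0 (- C a i j) 1, G i i j 0 1 (- C a j i)} \<subseteq> T"
      using aiT ajT g1T g2T by simp
    then have "card {alpha i, alpha j, G i i j 0 (- C a i j) 1, G i i j 0 1 (- C a j i)} \<le> 3"
      using card_mono[OF finT] cT by metis
    moreover have "card {alpha i, alpha j, G i i j 0 (- C a i j) 1, G i i j 0 1 (- C a j i)} = 4"
      using neq d1 ne by auto
    ultimately show False by simp
  qed
  have "- C a i j = 1" using arg_cong[OF eq, of "\<lambda>v. v i"] vi by simp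
  moreover have "1 = - C a j i" using arg_cong[OF eq, of "\<lambda>v. v j"] vj by simp
  ultimately show ?thesis by simp
qed

theorem lemma4p9:
  fixes rho :: "'i::finite \<Rightarrow> 'a \<Rightarrow> 'a"
    and C :: "'a \<Rightarrow> 'i \<Rightarrow> 'i \<Rightarrow> int"
    and R :: "'a \<Rightarrow> ('i \<Rightarrow> int) set"
  assumes "cartan_scheme rho C"
    and "connected_scheme rho"
    and "root_system rho C R"
    and "finite_m R a i j"
    and "m_ij R a i j = 3"
  shows "\<forall>l. C (rho i a) i l + C (rho i a) j l
            = C (rho i (rho j a)) i l + C (rho i (rho j a)) j l"
proof
  fix l
  have rs: "root_system rho C R" by fact
  have cs: "cartan_scheme rho C" by fact
  have ij: "i \<noteq> j"
  proof
    assume e: "i = j"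
    have "R a \<inter> {v. \<exists>p q::nat. v = (\<lambda>k. int p * alpha i k + int q * alpha j k)} \<subseteq> {alpha i}"
    proof
      fix v assume v: "v \<in> R a \<inter> {v. \<exists>p q::nat. v = (\<lambda>k. int p * alpha i k + int q * alpha j k)}"
      then obtain p q :: nat where vd: "v = (\<lambda>k. int p * alpha i k + int q * alpha i k)" using e by auto
      then have "v = (\<lambda>k. int (p + q) * alpha i k)" by (simp add: algebra_simps)
      then have "v \<in> {alpha i, - alpha i}" using rs_R2[OF rs, of a i] v by blast
      moreover have "v i \<ge> 0" using vd by (simp add: alpha_def)
      ultimately show "v \<in> {alpha i}" by (auto simp: alpha_def)
    qed
    then have "m_ij R a i j \<le> card {alpha i}" unfolding m_ij_def by (rule card_mono[rotated]) simp
    then show False using assms(5) by simp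
  qed
  obtain h1 h2 where h1: "C a i j = -1" and h2: "C a j i = -1" using lemA[OF rs ij assms(4,5)] by blast
  define b where "b = rho i a"
  define x1 where "x1 = rho j a"
  define d where "d = rho i x1"
  have rb: "rho i b = a" and rx: "rho j x1 = a" and rd: "rho i d = x1"
    by (simp_all add: b_def x1_def d_def cs_inv[OF cs])
  have bij: "C b i j = -1" using cs_C2[OF cs, of i a j] h1 by (simp add: b_def)
  have bji: "C b j i = -1" using lemB[OF rs ij h1 h2] by (simp add: b_def)
  have xji: "C x1 j i = -1" using cs_C2[OF cs, of j a i] h2 by (simp add: x1_def)
  have xij: "C x1 i j = -1" using lemB[OF rs ij[symmetric] h2 h1] by (simp add: x1_def)
  have dij: "C d i j = -1" using cs_C2[OF cs, of i x1 j] xij by (simp add: d_def)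
  have dji: "C d j i = -1" using lemB[OF rs ij xij xji] by (simp add: d_def)
  have dg: "\<And>x k. C x k k = 2" using cs_diag[OF cs] by blast
  have goal: "C b i l + C b j l = C d i l + C d j l"
  proof (cases "l = i \<or> l = j")
    case True
    then show ?thesis using bij bji dij dji dg by auto
  next
    case False
    then have li: "l \<noteq> i" and lj: "l \<noteq> j" by auto
    have c1: "C x1 i l = C d i l" using cs_C2[OF cs, of i x1 l] by (simp add: d_def)
    have c2: "C a i l = C b i l" using cs_C2[OF cs, of i a l] by (simp add: b_def)
    have al: "\<And>x. G l i j 1 0 0 \<in> R x" using rs_alpha[OF rs, of l] by (simp add: G_def)
    have f0: "G l i j 1 0 (- C b j l) \<in> R b"
      by (rule stepJ[OF rs _ ij al[of "rho j b"]]) (simp_all add: lj cs_C2[OF cs] cs_inv[OF cs])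
    have f1: "G l i j 1 (- C b i l - C b j l) (- C b j l) \<in> R a"
      by (rule stepI[OF rs _ ij f0]) (simp_all add: li bij rb dg)
    have f2: "G l i j 1 (- C b i l - C b j l) (- C a j l - C b i l) \<in> R x1"
      by (rule stepJ[OF rs _ ij f1]) (simp_all add: lj h2 dg x1_def)
    have f3: "G l i j 1 (C b j l - C x1 i l - C a j l) (- C a j l - C b i l) \<in> R d"
      by (rule stepI[OF rs _ ij f2]) (simp_all add: li xij dg d_def)
    have f4: "G l i j 1 (C b j l - C x1 i l - C a j l) (C b i l + C b j l - C d j l - C x1 i l) \<in> R (rho j d)"
      by (rule stepJ[OF rs _ ij f3]) (simp_all add: lj dji dg)
    have "G l i j 1 (C b j l - C x1 i l - C a j l) (C b i l + C b j l - C d j l - C x1 i l) j \<ge> 0"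
      by (rule rs_pos[OF rs f4, of l]) (simp add: G_l[OF li lj])
    then have ineq1: "C b i l + C b j l - C d j l - C x1 i l \<ge> 0" by (simp add: G_j[OF lj ij])
    have r0: "G l i j 1 0 (- C d j l) \<in> R d"
      by (rule stepJ[OF rs _ ij al[of "rho j d"]]) (simp_all add: lj cs_C2[OF cs] cs_inv[OF cs])
    have r1: "G l i j 1 (- C d i l - C d j l) (- C d j l) \<in> R x1"
      by (rule stepI[OF rs _ ij r0]) (simp_all add: li dij rd dg)
    have r2: "G l i j 1 (- C d i l - C d j l) (- C x1 j l - C d i l) \<in> R a"
      by (rule stepJ[OF rs _ ij r1]) (simp_all add: lj xji dg rx)
    have r3: "G l i j 1 (C d j l - C a i l - C x1 j l) (- C x1 j l - C d i l) \<in> R b"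
      by (rule stepI[OF rs _ ij r2]) (simp_all add: li h1 dg b_def)
    have r4: "G l i j 1 (C d j l - C a i l - C x1 j l) (C d i l + C d j l - C b j l - C a i l) \<in> R (rho j b)"
      by (rule stepJ[OF rs _ ij r3]) (simp_all add: lj bji dg)
    have "G l i j 1 (C d j l - C a i l - C x1 j l) (C d i l + C d j l - C b j l - C a i l) j \<ge> 0"
      by (rule rs_pos[OF rs r4, of l]) (simp add: G_l[OF li lj])
    then have ineq2: "C d i l + C d j l - C b j l - C a i l \<ge> 0" by (simp add: G_j[OF lj ij])
    show ?thesis using ineq1 ineq2 c1 c2 by linarith
  qed
  then show "C (rho i a) i l + C (rho i a) j l = C (rho i (rho j a)) i l + C (rho i (rho j a)) j l"
    by (simp add: b_def d_def x1_def)
qed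

end
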